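(* In the setting described in the context, let $C_\phi$ be a Lipschitz constant of $\phi$. For every $m$ and every $x,x'$ lying in the same green cylinder, $$e^{-C_\phi/2}\le \frac{H_m(x)}{H_m(x')}\le e^{C_\phi/2}.$$
   Context: Setting: $A$ ($K\times K$) and $D$ ($N\times N$) are irreducible $\{0,1\}$-matrices; $M_0$ is a $(K+N)\times(K+N)$ $\{0,1\}$-matrix with diagonal blocks $A$, $D$ and some power with all entries positive; the alphabet is $\{\alpha_1,\dots,\alpha_K,\delta_1,\dots,\delta_N\}$; $\Sigma_0$ is the one-sided SFT for $M_0$ with shift $\sigma$ and metric $d(\omega,\omega')=2^{-\min\{k:\omega_k\ne\omega'_k\}}$; $\Sigma_A,\Sigma_D$ are the points with only $\alpha$-digits, resp. only $\delta$-digits; $\phi:\Sigma_0\to\mathbb R$ is Lipschitz with $|\phi(x)-\phi(y)|\le C_\phi d(x,y)$ and has the same pressure $P$ on $\Sigma_A$ and $\Sigma_D$. $\alpha_j\delta_l$ denotes any allowed word $\alpha$-digit then $\delta$-digit, $\delta_i\alpha_k$ any allowed word $\delta$-digit then $\alpha$-digit; $\delta^n,\alpha^n$ denote words of $n$ $\delta$-, resp. $\alpha$-digits. $A'\le A$, $D'\le D$ entrywise are $\{0,1\}$-matrices with $A'\ne A$, $D'\ne D$, rows of $A'$ indexed by $\alpha$-digits that can follow a $\delta$-digit nonzero, rows of $D'$ indexed by $\delta$-digits that can follow an $\alpha$-digit nonzero; $(n_m),(n'_m)$ increasing integer sequences tending to $\infty$. $\Sigma_m\subset\Sigma_0$ is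 obtained by additionally forbidding: $\alpha_j\delta_l\delta^n\delta_i\alpha_k$ with $n<n'_m-2$, or with $n\ge n'_m-2$ and $\delta_l$ followed by the first $n'_m-2$ letters of $\delta^n$ not $D'$-eligible; $\delta_i\alpha_k\alpha^n\alpha_j\delta_l$ with $n<n_m-2$, or with $n\ge n_m-2$ and $\alpha_k$ followed by the first $n_m-2$ letters of $\alpha^n$ not $A'$-eligible (eligible = all consecutive transitions allowed by the matrix). $P_m$ is the pressure of $\phi$ on $\Sigma_m$. Induced scheme: green cylinders are the 2-cylinders $[\alpha_j\delta_l]$ and $[\delta_i\alpha_k]$, and $G$ is their union. For $x\in[\delta_i\alpha_k]$ its $g_m$-preimages are the points $y=\alpha_j\delta_l w x$ (with $w$ a $\delta$-word) such that $\alpha_j\delta_l w\delta_i\alpha_k$ is allowed in $\Sigma_m$, with return time $r_m(y)=|w|+2$; symmetrically for $x\in[\alpha_j\delta_l]$. The induced transfer operator is $\mathcal L_{G,m}f(x)=\sum_{y:\,g_m(y)=x}e^{S_{r_m(y)}\phi(y)-r_m(y)P_m}f(y)$, with $S_n\phi=\sum_{i<n}\phi\circ\sigma^i$. It has spectral radius 1; $\nu_m$ is the probability with $\int\mathcal L_{G,m}f\,d\nu_m=\int f\,d\nu_m$, and $H_m=\lim_{n}\frac1n\sum_{k=0}^{n-1}\mathcal L_{G,m}^k(\mathbf 1_G)$ (uniform limit) is the positive eigenfunction $\mathcal L_{G,m}H_m=H_m$ with $\int H_m\,d\nu_m=1$. *)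

theory Defs
  imports "HOL-Analysis.Analysis"
begin

text \<open>The alpha-digits alpha_1..alpha_K are
  0..K-1 and the delta-digits delta_1..delta_N are K..K+N-1.  Matrices with entries in
  {0,1} are represented as boolean relations on indices (True = 1).  A is indexed by
  alpha-digits 0..K-1; D (and D') by delta-indices 0..N-1 (delta-digit K+l has index l).\<close>

type_synonym seq = "nat \<Rightarrow> nat"

text \<open>walk d M n i j: the (i,j) entry of M^n is positive (M a d x d 0-1 matrix).\<close>
fun walk :: "nat \<Rightarrow> (nat \<Rightarrow> nat \<Rightarrow> bool) \<Rightarrow> nat \<Rightarrow> nat \<Rightarrow> nat \<Rightarrow> bool" where
  "walk d M 0 i j = (i = j)"
| "walk d M (Suc n) i j = (\<exists>k<d. M i k \<and> walk d M n k j)"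

definition irreducible_mat :: "nat \<Rightarrow> (nat \<Rightarrow> nat \<Rightarrow> bool) \<Rightarrow> bool" where
  "irreducible_mat d M \<longleftrightarrow> (\<forall>i<d. \<forall>j<d. \<exists>n>0. walk d M n i j)"

definition some_power_positive :: "nat \<Rightarrow> (nat \<Rightarrow> nat \<Rightarrow> bool) \<Rightarrow> bool" where
  "some_power_positive d M \<longleftrightarrow> (\<exists>n. \<forall>i<d. \<forall>j<d. walk d M n i j)"

definition SFT :: "nat \<Rightarrow> (nat \<Rightarrow> nat \<Rightarrow> bool) \<Rightarrow> seq set" where
  "SFT d M = {\<omega>. \<forall>k. \<omega> k < d \<and> M (\<omega> k) (\<omega> (Suc k))}"

definition dist_sym :: "seq \<Rightarrow> seq \<Rightarrow> real" where
  "dist_sym x y = (if x = y then 0 else (1/2) ^ (LEAST k. x k \<noteq> y k))"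

definition shift_pow :: "nat \<Rightarrow> seq \<Rightarrow> seq" where
  "shift_pow i x = (\<lambda>k. x (k + i))"

definition birkhoff :: "(seq \<Rightarrow> real) \<Rightarrow> nat \<Rightarrow> seq \<Rightarrow> real" where
  "birkhoff \<phi> n x = (\<Sum>i<n. \<phi> (shift_pow i x))"

definition lang :: "seq set \<Rightarrow> nat \<Rightarrow> nat list set" where
  "lang X n = (\<lambda>x. map x [0..<n]) ` X"

definition pressure :: "seq set \<Rightarrow> (seq \<Rightarrow> real) \<Rightarrow> real" where
  "pressure X \<phi> = lim (\<lambda>n. ln (\<Sum>w\<in>lang X n.
       exp (SUP x\<in>{x\<in>X. map x [0..<n] = w}. birkhoff \<phi> n x)) / real n)"

definition Sigma_A :: "nat \<Rightarrow> nat \<Rightarrow> (nat \<Rightarrow> nat \<Rightarrow> bool) \<Rightarrow> seq set" where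
  "Sigma_A K N M0 = {\<omega>\<in>SFT (K+N) M0. \<forall>k. \<omega> k < K}"

definition Sigma_D :: "nat \<Rightarrow> nat \<Rightarrow> (nat \<Rightarrow> nat \<Rightarrow> bool) \<Rightarrow> seq set" where
  "Sigma_D K N M0 = {\<omega>\<in>SFT (K+N) M0. \<forall>k. K \<le> \<omega> k}"

text \<open>delta_forb K D' L f p n: at position p of f starts a word
  alpha_j delta_l delta^n delta_i alpha_k (length n+4) which is forbidden in Sigma_m,
  where L = n'_m.\<close>
definition delta_forb :: "nat \<Rightarrow> (nat \<Rightarrow> nat \<Rightarrow> bool) \<Rightarrow> nat \<Rightarrow> seq \<Rightarrow> nat \<Rightarrow> nat \<Rightarrow> bool" where
  "delta_forb K D' L f p n \<longleftrightarrow>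
     f p < K \<and> (\<forall>t. p < t \<and> t \<le> p + n + 2 \<longrightarrow> K \<le> f t) \<and> f (p + n + 3) < K \<and>
     (n < L - 2 \<or>
      (L - 2 \<le> n \<and> \<not> (\<forall>t. p < t \<and> t < p + 1 + (L - 2) \<longrightarrow> D' (f t - K) (f (Suc t) - K))))"

text \<open>alpha_forb K A' L f p n: at position p of f starts a word
  delta_i alpha_k alpha^n alpha_j delta_l which is forbidden in Sigma_m, where L = n_m.\<close>
definition alpha_forb :: "nat \<Rightarrow> (nat \<Rightarrow> nat \<Rightarrow> bool) \<Rightarrow> nat \<Rightarrow> seq \<Rightarrow> nat \<Rightarrow> nat \<Rightarrow> bool" where
  "alpha_forb K A' L f p n \<longleftrightarrow>
     K \<le> f p \<and> (\<forall>t. p < t \<and> t \<le> p + n + 2 \<longrightarrow> f t < K) \<and> K \<le> f (p + n + 3) \<and>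
     (n < L - 2 \<or>
      (L - 2 \<le> n \<and> \<not> (\<forall>t. p < t \<and> t < p + 1 + (L - 2) \<longrightarrow> A' (f t) (f (Suc t)))))"

text \<open>Sigma_m, with La = n_m and Ld = n'_m.\<close>
definition Sigma_m :: "nat \<Rightarrow> nat \<Rightarrow> (nat \<Rightarrow> nat \<Rightarrow> bool) \<Rightarrow> (nat \<Rightarrow> nat \<Rightarrow> bool) \<Rightarrow>
    (nat \<Rightarrow> nat \<Rightarrow> bool) \<Rightarrow> nat \<Rightarrow> nat \<Rightarrow> seq set" where
  "Sigma_m K N M0 A' D' La Ld =
     {\<omega>\<in>SFT (K+N) M0. \<not> (\<exists>p n. delta_forb K D' Ld \<omega> p n) \<and> \<not> (\<exists>p n. alpha_forb K A' La \<omega> p n)}"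

definition word_allowed :: "nat \<Rightarrow> nat \<Rightarrow> (nat \<Rightarrow> nat \<Rightarrow> bool) \<Rightarrow> (nat \<Rightarrow> nat \<Rightarrow> bool) \<Rightarrow>
    (nat \<Rightarrow> nat \<Rightarrow> bool) \<Rightarrow> nat \<Rightarrow> nat \<Rightarrow> nat list \<Rightarrow> bool" where
  "word_allowed K N M0 A' D' La Ld w \<longleftrightarrow>
     (\<forall>k<length w. w ! k < K + N) \<and> (\<forall>k. Suc k < length w \<longrightarrow> M0 (w ! k) (w ! Suc k)) \<and>
     \<not> (\<exists>p n. p + n + 3 < length w \<and> delta_forb K D' Ld (\<lambda>k. w ! k) p n) \<and>
     \<not> (\<exists>p n. p + n + 3 < length w \<and> alpha_forb K A' La (\<lambda>k. w ! k) p n)"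

definition pcat :: "nat list \<Rightarrow> seq \<Rightarrow> seq" where
  "pcat u x = (\<lambda>k. if k < length u then u ! k else x (k - length u))"

definition green :: "nat \<Rightarrow> nat \<Rightarrow> (nat \<Rightarrow> nat \<Rightarrow> bool) \<Rightarrow> seq set" where
  "green K N M0 = {x\<in>SFT (K+N) M0. (x 0 < K \<and> K \<le> x 1) \<or> (K \<le> x 0 \<and> x 1 < K)}"

text \<open>Prefixes u such that y = u x is a g_m-preimage of a point x whose first two
  symbols are a b; the return time is r_m(y) = length u.\<close>
definition pre_prefixes :: "nat \<Rightarrow> nat \<Rightarrow> (nat \<Rightarrow> nat \<Rightarrow> bool) \<Rightarrow> (nat \<Rightarrow> nat \<Rightarrow> bool) \<Rightarrow>
    (nat \<Rightarrow> nat \<Rightarrow> bool) \<Rightarrow> nat \<Rightarrow> nat \<Rightarrow> nat \<Rightarrow> nat \<Rightarrow> nat list set" where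
  "pre_prefixes K N M0 A' D' La Ld a b =
     {u. 2 \<le> length u \<and> word_allowed K N M0 A' D' La Ld (u @ [a, b]) \<and>
         ((K \<le> a \<and> b < K \<and> u ! 0 < K \<and> (\<forall>i. 1 \<le> i \<and> i < length u \<longrightarrow> K \<le> u ! i)) \<or>
          (a < K \<and> K \<le> b \<and> K \<le> u ! 0 \<and> (\<forall>i. 1 \<le> i \<and> i < length u \<longrightarrow> u ! i < K)))}"

definition Lop :: "nat \<Rightarrow> nat \<Rightarrow> (nat \<Rightarrow> nat \<Rightarrow> bool) \<Rightarrow> (nat \<Rightarrow> nat \<Rightarrow> bool) \<Rightarrow>
    (nat \<Rightarrow> nat \<Rightarrow> bool) \<Rightarrow> nat \<Rightarrow> nat \<Rightarrow> (seq \<Rightarrow> real) \<Rightarrow> real \<Rightarrow> (seq \<Rightarrow> real) \<Rightarrow> seq \<Rightarrow> real" where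
  "Lop K N M0 A' D' La Ld \<phi> Pm f x =
     infsum (\<lambda>u. exp (birkhoff \<phi> (length u) (pcat u x) - real (length u) * Pm) * f (pcat u x))
       (pre_prefixes K N M0 A' D' La Ld (x 0) (x 1))"

definition cesaro :: "nat \<Rightarrow> nat \<Rightarrow> (nat \<Rightarrow> nat \<Rightarrow> bool) \<Rightarrow> (nat \<Rightarrow> nat \<Rightarrow> bool) \<Rightarrow>
    (nat \<Rightarrow> nat \<Rightarrow> bool) \<Rightarrow> nat \<Rightarrow> nat \<Rightarrow> (seq \<Rightarrow> real) \<Rightarrow> nat \<Rightarrow> seq \<Rightarrow> real" where
  "cesaro K N M0 A' D' La Ld \<phi> n x =
     (\<Sum>k<n. ((Lop K N M0 A' D' La Ld \<phi> (pressure (Sigma_m K N M0 A' D' La Ld) \<phi>) ^^ k)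
               (indicator (green K N M0))) x) / real n"

definition Hm :: "nat \<Rightarrow> nat \<Rightarrow> (nat \<Rightarrow> nat \<Rightarrow> bool) \<Rightarrow> (nat \<Rightarrow> nat \<Rightarrow> bool) \<Rightarrow>
    (nat \<Rightarrow> nat \<Rightarrow> bool) \<Rightarrow> nat \<Rightarrow> nat \<Rightarrow> (seq \<Rightarrow> real) \<Rightarrow> seq \<Rightarrow> real" where
  "Hm K N M0 A' D' La Ld \<phi> x = lim (\<lambda>n. cesaro K N M0 A' D' La Ld \<phi> n x)"

end

theory Submission
  imports Defs
begin



lemma dist_sym_le:
  assumes "\<forall>i<k. y i = z i" shows "dist_sym y z \<le> (1/2)^k"
proof (cases "y = z")
  case True then show ?thesis by (simp add: dist_sym_def)
next
  case False
  then obtain j where "y j \<noteq> z j" by auto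
  hence "y (LEAST j. y j \<noteq> z j) \<noteq> z (LEAST j. y j \<noteq> z j)" by (rule LeastI)
  hence "k \<le> (LEAST j. y j \<noteq> z j)" using assms by (meson not_less)
  hence "(1/2::real)^(LEAST j. y j \<noteq> z j) \<le> (1/2)^k" by (rule power_decreasing) auto
  thus ?thesis using False by (simp add: dist_sym_def)
qed

lemma geom_sum: "(\<Sum>i<L. (1/2::real)^(L+n-i)) = (1/2)^n * (1 - (1/2)^L)"
proof (induction L)
  case 0 then show ?case by simp
next
  case (Suc L)
  have "(\<Sum>i<Suc L. (1/2::real)^(Suc L+n-i)) = (\<Sum>i<L. (1/2::real)^(Suc L+n-i)) + (1/2)^(Suc n)"
    by simp
  also have "(\<Sum>i<L. (1/2::real)^(Suc L+n-i)) = (\<Sum>i<L. (1/2) * (1/2::real)^(L+n-i))"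
    by (rule sum.cong) (auto simp: Suc_diff_le)
  also have "\<dots> = (1/2) * (\<Sum>i<L. (1/2::real)^(L+n-i))" by (rule sum_distrib_left[symmetric])
  also have "\<dots> = (1/2) * ((1/2)^n * (1 - (1/2)^L))" by (simp only: Suc.IH)
  finally show ?case by (simp add: algebra_simps)
qed

lemma geom_le: "(\<Sum>i<L. (1/2::real)^(L+n-i)) \<le> (1/2)^n"
  unfolding geom_sum by (simp add: mult_left_le)

lemma shift_SFT: "y \<in> SFT d M \<Longrightarrow> shift_pow i y \<in> SFT d M"
  by (simp add: SFT_def shift_pow_def)

lemma pcat_prefix:
  assumes "k < length u + 2" "y 0 = a" "y 1 = b"
  shows "pcat u y k = (u@[a,b])!k"
proof (cases "k < length u")
  case True then show ?thesis by (simp add: pcat_def nth_append)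
next
  case False
  then have "k = length u \<or> k = Suc (length u)" using assms(1) by auto
  then show ?thesis using assms by (auto simp: pcat_def nth_append)
qed

lemma pcat_SFT:
  assumes y: "y \<in> SFT (K+N) M0" and w: "word_allowed K N M0 A' D' La Ld (u@[y 0, y 1])"
  shows "pcat u y \<in> SFT (K+N) M0"
  unfolding SFT_def
proof (intro CollectI allI conjI)
  fix k
  let ?w = "u@[y 0, y 1]"
  have wl: "\<forall>k<length ?w. ?w ! k < K + N" and wt: "\<forall>k. Suc k < length ?w \<longrightarrow> M0 (?w ! k) (?w ! Suc k)"
    using w unfolding word_allowed_def by blast+
  show "pcat u y k < K + N"
  proof (cases "k < length u + 2")
    case True then show ?thesis using wl pcat_prefix[OF True] by simp
  next
    case False then show ?thesis using y by (simp add: pcat_def SFT_def)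
  qed
  show "M0 (pcat u y k) (pcat u y (Suc k))"
  proof (cases "Suc k < length u + 2")
    case True
    then show ?thesis using wt pcat_prefix[OF True] pcat_prefix[of k u] by simp
  next
    case False
    then have "pcat u y k = y (k - length u)" "pcat u y (Suc k) = y (Suc (k - length u))"
      by (auto simp: pcat_def Suc_diff_le)
    then show ?thesis using y by (simp add: SFT_def)
  qed
qed

definition Qinv :: "nat \<Rightarrow> nat \<Rightarrow> (nat \<Rightarrow> nat \<Rightarrow> bool) \<Rightarrow> real \<Rightarrow> (seq \<Rightarrow> real) \<Rightarrow> bool" where
  "Qinv K N M0 C f \<longleftrightarrow> (\<forall>y. 0 \<le> f y) \<and>
     (\<forall>n y z. 2 \<le> n \<longrightarrow> y \<in> SFT (K+N) M0 \<longrightarrow> z \<in> SFT (K+N) M0 \<longrightarrow> (\<forall>i<n. y i = z i) \<longrightarrow>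
        f y \<le> exp (2 * C * (1/2)^n) * f z)"

lemma birk_bound:
  assumes lip: "\<forall>y\<in>SFT (K + N) M0. \<forall>z\<in>SFT (K + N) M0. \<bar>\<phi> y - \<phi> z\<bar> \<le> C * dist_sym y z"
    and C: "0 \<le> C"
    and a: "a \<in> SFT (K+N) M0" and b: "b \<in> SFT (K+N) M0" and ab: "\<forall>i<L+n. a i = b i"
  shows "birkhoff \<phi> L a \<le> birkhoff \<phi> L b + C * (1/2)^n"
proof -
  have "\<phi> (shift_pow i a) \<le> \<phi> (shift_pow i b) + C * (1/2)^(L+n-i)" if "i < L" for i
  proof -
    have "\<forall>j<L+n-i. shift_pow i a j = shift_pow i b j" using ab by (auto simp: shift_pow_def)
    hence d: "dist_sym (shift_pow i a) (shift_pow i b) \<le> (1/2)^(L+n-i)" by (rule dist_sym_le)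
    have "\<bar>\<phi> (shift_pow i a) - \<phi> (shift_pow i b)\<bar> \<le> C * dist_sym (shift_pow i a) (shift_pow i b)"
      using lip shift_SFT[OF a] shift_SFT[OF b] by blast
    also have "\<dots> \<le> C * (1/2)^(L+n-i)" using d C by (rule mult_left_mono[OF _ C] | simp add: mult_left_mono)
    finally show ?thesis by linarith
  qed
  hence "birkhoff \<phi> L a \<le> (\<Sum>i<L. \<phi> (shift_pow i b) + C * (1/2)^(L+n-i))"
    unfolding birkhoff_def by (intro sum_mono) auto
  also have "\<dots> = birkhoff \<phi> L b + C * (\<Sum>i<L. (1/2)^(L+n-i))"
    by (simp add: birkhoff_def sum.distrib sum_distrib_left)
  also have "\<dots> \<le> birkhoff \<phi> L b + C * (1/2)^n"
    using geom_le[of L n] C by (simp add: mult_left_mono)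
  finally show ?thesis .
qed

lemma term_bound:
  assumes lip: "\<forall>y\<in>SFT (K + N) M0. \<forall>z\<in>SFT (K + N) M0. \<bar>\<phi> y - \<phi> z\<bar> \<le> C * dist_sym y z"
    and C: "0 \<le> C" and Q: "Qinv K N M0 C f"
    and y: "y \<in> SFT (K+N) M0" and z: "z \<in> SFT (K+N) M0" and n: "2 \<le> n" and yz: "\<forall>i<n. y i = z i"
    and u: "u \<in> pre_prefixes K N M0 A' D' La Ld (y 0) (y 1)"
  shows "exp (birkhoff \<phi> (length u) (pcat u y) - real (length u) * Pm) * f (pcat u y)
     \<le> exp (2 * C * (1/2)^n) * (exp (birkhoff \<phi> (length u) (pcat u z) - real (length u) * Pm) * f (pcat u z))"
proof -
  define L where "L = length u"
  have L2: "2 \<le> L" using u by (simp add: pre_prefixes_def L_def)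
  have z01: "z 0 = y 0" "z 1 = y 1" using yz n by auto
  have w: "word_allowed K N M0 A' D' La Ld (u@[y 0, y 1])" using u by (simp add: pre_prefixes_def)
  have uy: "pcat u y \<in> SFT (K+N) M0" by (rule pcat_SFT[OF y w])
  have uz: "pcat u z \<in> SFT (K+N) M0" by (rule pcat_SFT[OF z]) (use w z01 in simp)
  have agree: "\<forall>i<L+n. pcat u y i = pcat u z i" using yz by (auto simp: pcat_def L_def)
  have b: "birkhoff \<phi> L (pcat u y) \<le> birkhoff \<phi> L (pcat u z) + C * (1/2)^n"
    by (rule birk_bound[OF lip C uy uz agree])
  have f0: "0 \<le> f (pcat u y)" "0 \<le> f (pcat u z)" using Q by (auto simp: Qinv_def)
  have fb: "f (pcat u y) \<le> exp (2 * C * (1/2)^(L+n)) * f (pcat u z)"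
    using Q uy uz agree n unfolding Qinv_def by auto
  have p4: "(1/2::real)^L \<le> (1/2)^2" by (rule power_decreasing[OF L2]) auto
  have "(1/2::real)^(L+n) = (1/2)^L * (1/2)^n" by (simp add: power_add)
  also have "\<dots> \<le> (1/2)^2 * (1/2)^n" by (rule mult_right_mono[OF p4]) simp
  finally have "(1/2::real)^(L+n) \<le> (1/4) * (1/2)^n" by (simp add: power2_eq_square)
  hence "2 * C * (1/2::real)^(L+n) \<le> 2 * C * ((1/4) * (1/2)^n)" by (rule mult_left_mono) (use C in simp)
  moreover have "0 \<le> C * (1/2::real)^n" using C by simp
  ultimately have ce: "2 * C * (1/2::real)^(L+n) \<le> C * (1/2)^n" by (simp add: algebra_simps)
  have "exp (2 * C * (1/2)^(L+n)) * f (pcat u z) \<le> exp (C * (1/2)^n) * f (pcat u z)"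
    by (rule mult_right_mono) (use ce f0 in auto)
  hence fb2: "f (pcat u y) \<le> exp (C * (1/2)^n) * f (pcat u z)" using fb by linarith
  have eb: "exp (birkhoff \<phi> L (pcat u y) - real L * Pm) \<le> exp (C * (1/2)^n) * exp (birkhoff \<phi> L (pcat u z) - real L * Pm)"
    using b by (simp add: exp_add[symmetric])
  have "exp (birkhoff \<phi> L (pcat u y) - real L * Pm) * f (pcat u y)
      \<le> (exp (C * (1/2)^n) * exp (birkhoff \<phi> L (pcat u z) - real L * Pm)) * (exp (C * (1/2)^n) * f (pcat u z))"
    by (rule mult_mono[OF eb fb2]) (use f0 in auto)
  also have "\<dots> = (exp (C * (1/2)^n) * exp (C * (1/2)^n)) * (exp (birkhoff \<phi> L (pcat u z) - real L * Pm) * f (pcat u z))"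
    by (simp add: algebra_simps)
  also have "exp (C * (1/2)^n) * exp (C * (1/2)^n) = exp (2 * C * (1/2)^n)"
    by (simp add: exp_add[symmetric])
  finally show ?thesis by (simp add: L_def)
qed

lemma Lop_Qinv:
  assumes lip: "\<forall>y\<in>SFT (K + N) M0. \<forall>z\<in>SFT (K + N) M0. \<bar>\<phi> y - \<phi> z\<bar> \<le> C * dist_sym y z"
    and C: "0 \<le> C" and Q: "Qinv K N M0 C f"
  shows "Qinv K N M0 C (Lop K N M0 A' D' La Ld \<phi> Pm f)"
  unfolding Qinv_def
proof (intro conjI allI impI)
  fix y
  show "0 \<le> Lop K N M0 A' D' La Ld \<phi> Pm f y"
    unfolding Lop_def using Q by (intro infsum_nonneg) (auto simp: Qinv_def)
next
  fix n y z
  assume n: "2 \<le> n" and y: "y \<in> SFT (K+N) M0" and z: "z \<in> SFT (K+N) M0" and yz: "\<forall>i<n. y i = z i"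
  have z01: "z 0 = y 0" "z 1 = y 1" using yz n by auto
  define P where "P = pre_prefixes K N M0 A' D' La Ld (y 0) (y 1)"
  define ty where "ty = (\<lambda>u. exp (birkhoff \<phi> (length u) (pcat u y) - real (length u) * Pm) * f (pcat u y))"
  define tz where "tz = (\<lambda>u. exp (birkhoff \<phi> (length u) (pcat u z) - real (length u) * Pm) * f (pcat u z))"
  have Ly: "Lop K N M0 A' D' La Ld \<phi> Pm f y = infsum ty P" by (simp add: Lop_def ty_def P_def)
  have Lz: "Lop K N M0 A' D' La Ld \<phi> Pm f z = infsum tz P" by (simp add: Lop_def tz_def P_def z01[simplified])
  have yz': "\<forall>i<n. z i = y i" using yz by auto
  have b1: "ty u \<le> exp (2 * C * (1/2)^n) * tz u" if "u \<in> P" for u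
    using term_bound[OF lip C Q y z n yz] that by (simp add: ty_def tz_def P_def)
  have b2: "tz u \<le> exp (2 * C * (1/2)^n) * ty u" if "u \<in> P" for u
    using term_bound[OF lip C Q z y n yz'] that by (simp add: ty_def tz_def P_def z01[simplified])
  have ty0: "0 \<le> ty u" "0 \<le> tz u" for u using Q by (auto simp: Qinv_def ty_def tz_def)
  show "Lop K N M0 A' D' La Ld \<phi> Pm f y \<le> exp (2 * C * (1/2)^n) * Lop K N M0 A' D' La Ld \<phi> Pm f z"
  proof (cases "ty summable_on P")
    case False
    then have "infsum ty P = 0" by (rule infsum_not_exists)
    moreover have "0 \<le> infsum tz P" using ty0 by (intro infsum_nonneg) auto
    ultimately show ?thesis using Ly Lz by simp
  next
    case True
    have sz: "tz summable_on P"
      by (rule summable_on_comparison_test[OF summable_on_cmult_right[OF True] b2]) (use ty0 in auto)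
    have "infsum ty P \<le> infsum (\<lambda>u. exp (2 * C * (1/2)^n) * tz u) P"
      by (rule infsum_mono[OF True summable_on_cmult_right[OF sz] b1])
    also have "\<dots> = exp (2 * C * (1/2)^n) * infsum tz P" by (rule infsum_cmult_right')
    finally show ?thesis using Ly Lz by simp
  qed
qed

lemma iter_Qinv:
  assumes lip: "\<forall>y\<in>SFT (K + N) M0. \<forall>z\<in>SFT (K + N) M0. \<bar>\<phi> y - \<phi> z\<bar> \<le> C * dist_sym y z"
    and C: "0 \<le> C"
  shows "Qinv K N M0 C ((Lop K N M0 A' D' La Ld \<phi> Pm ^^ k) (indicator (green K N M0)))"
proof (induction k)
  case 0
  have "Qinv K N M0 C (indicator (green K N M0))"
    unfolding Qinv_def
  proof (intro conjI allI impI)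
    fix n y z
    assume n: "2 \<le> n" and y: "y \<in> SFT (K+N) M0" and z: "z \<in> SFT (K+N) M0" and yz: "\<forall>i<n. y i = z i"
    have "y 0 = z 0" "y 1 = z 1" using yz n by auto
    hence "indicator (green K N M0) y = (indicator (green K N M0) z :: real)"
      using y z by (simp add: green_def indicator_def)
    moreover have "(1::real) \<le> exp (2 * C * (1/2)^n)" using C by simp
    ultimately show "indicator (green K N M0) y \<le> exp (2 * C * (1/2)^n) * (indicator (green K N M0) z :: real)"
      by (simp add: indicator_def)
  qed (simp add: indicator_def)
  then show ?case by simp
next
  case (Suc k)
  then show ?case using Lop_Qinv[OF lip C] by simp
qed


theorem lemma2:
  fixes K N :: nat and A D M0 A' D' :: "nat \<Rightarrow> nat \<Rightarrow> bool"
    and \<phi> :: "seq \<Rightarrow> real" and C\<phi> P :: real and nseq nseq' :: "nat \<Rightarrow> nat"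
    and m :: nat and x x' :: seq
  assumes A_irr: "irreducible_mat K A" and D_irr: "irreducible_mat N D"
    and M0_A: "\<forall>i<K. \<forall>j<K. M0 i j = A i j"
    and M0_D: "\<forall>i<N. \<forall>j<N. M0 (K + i) (K + j) = D i j"
    and M0_prim: "some_power_positive (K + N) M0"
    and lip: "\<forall>y\<in>SFT (K + N) M0. \<forall>z\<in>SFT (K + N) M0. \<bar>\<phi> y - \<phi> z\<bar> \<le> C\<phi> * dist_sym y z"
    and PA: "pressure (Sigma_A K N M0) \<phi> = P" and PD: "pressure (Sigma_D K N M0) \<phi> = P"
    and A'_le: "\<forall>i<K. \<forall>j<K. A' i j \<longrightarrow> A i j" and A'_ne: "\<exists>i<K. \<exists>j<K. A' i j \<noteq> A i j"
    and D'_le: "\<forall>i<N. \<forall>j<N. D' i j \<longrightarrow> D i j" and D'_ne: "\<exists>i<N. \<exists>j<N. D' i j \<noteq> D i j"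
    and A'_rows: "\<forall>k<K. (\<exists>i<N. M0 (K + i) k) \<longrightarrow> (\<exists>j<K. A' k j)"
    and D'_rows: "\<forall>l<N. (\<exists>k<K. M0 k (K + l)) \<longrightarrow> (\<exists>j<N. D' l j)"
    and n_mono: "strict_mono nseq" and n'_mono: "strict_mono nseq'"
    and H_lim: "\<exists>h. uniform_limit (green K N M0)
                   (\<lambda>n. cesaro K N M0 A' D' (nseq m) (nseq' m) \<phi> n) h sequentially
                 \<and> (\<forall>y\<in>green K N M0. 0 < h y)"
    and x: "x \<in> green K N M0" and x': "x' \<in> green K N M0"
    and same: "x' 0 = x 0" "x' 1 = x 1"
  shows "exp (- C\<phi> / 2) \<le> Hm K N M0 A' D' (nseq m) (nseq' m) \<phi> x / Hm K N M0 A' D' (nseq m) (nseq' m) \<phi> x'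
       \<and> Hm K N M0 A' D' (nseq m) (nseq' m) \<phi> x / Hm K N M0 A' D' (nseq m) (nseq' m) \<phi> x' \<le> exp (C\<phi> / 2)"
proof -
  let ?e = "exp (2 * C\<phi> * (1/2)^2)"
  have e: "?e = exp (C\<phi> / 2)" by (simp add: power2_eq_square)
  have xS: "x \<in> SFT (K+N) M0" and x'S: "x' \<in> SFT (K+N) M0" using x x' by (auto simp: green_def)
  have x01: "x 0 \<noteq> x 1" using x by (auto simp: green_def)
  have C: "0 \<le> C\<phi>"
  proof (rule ccontr)
    assume "\<not> 0 \<le> C\<phi>"
    have ne: "x \<noteq> shift_pow 1 x" using x01 by (metis shift_pow_def add_0)
    have "0 < dist_sym x (shift_pow 1 x)" using ne by (simp add: dist_sym_def)
    moreover have "\<bar>\<phi> x - \<phi> (shift_pow 1 x)\<bar> \<le> C\<phi> * dist_sym x (shift_pow 1 x)"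
      using lip xS shift_SFT[OF xS] by blast
    ultimately show False using \<open>\<not> 0 \<le> C\<phi>\<close>
      by (smt (verit) mult_neg_pos)
  qed
  let ?L = "Lop K N M0 A' D' (nseq m) (nseq' m) \<phi> (pressure (Sigma_m K N M0 A' D' (nseq m) (nseq' m)) \<phi>)"
  have Q: "Qinv K N M0 C\<phi> ((?L ^^ k) (indicator (green K N M0)))" for k
    by (rule iter_Qinv[OF lip C])
  have ag: "\<forall>i<2. x i = x' i" "\<forall>i<2. x' i = x i" using same by (auto simp: less_2_cases_iff)
  have ces: "cesaro K N M0 A' D' (nseq m) (nseq' m) \<phi> n y \<le> ?e * cesaro K N M0 A' D' (nseq m) (nseq' m) \<phi> n z"
    if yS: "y \<in> SFT (K+N) M0" and zS: "z \<in> SFT (K+N) M0" and yz: "\<forall>i<2. y i = z i" for n y z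
  proof -
    have "(\<Sum>k<n. (?L ^^ k) (indicator (green K N M0)) y) \<le> (\<Sum>k<n. ?e * (?L ^^ k) (indicator (green K N M0)) z)"
      by (intro sum_mono) (use Q yS zS yz in \<open>auto simp: Qinv_def\<close>)
    also have "\<dots> = ?e * (\<Sum>k<n. (?L ^^ k) (indicator (green K N M0)) z)" by (simp add: sum_distrib_left)
    finally have S: "(\<Sum>k<n. (?L ^^ k) (indicator (green K N M0)) y) \<le> ?e * (\<Sum>k<n. (?L ^^ k) (indicator (green K N M0)) z)" .
    show ?thesis unfolding cesaro_def using divide_right_mono[OF S, of "real n"] by simp
  qed
  obtain h where ul: "uniform_limit (green K N M0) (\<lambda>n. cesaro K N M0 A' D' (nseq m) (nseq' m) \<phi> n) h sequentially"
    and hpos: "\<forall>y\<in>green K N M0. 0 < h y" using H_lim by blast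
  have tx: "(\<lambda>n. cesaro K N M0 A' D' (nseq m) (nseq' m) \<phi> n x) \<longlonglongrightarrow> h x"
    by (rule tendsto_uniform_limitI[OF ul x])
  have tx': "(\<lambda>n. cesaro K N M0 A' D' (nseq m) (nseq' m) \<phi> n x') \<longlonglongrightarrow> h x'"
    by (rule tendsto_uniform_limitI[OF ul x'])
  have Hx: "Hm K N M0 A' D' (nseq m) (nseq' m) \<phi> x = h x" unfolding Hm_def using tx by (rule limI)
  have Hx': "Hm K N M0 A' D' (nseq m) (nseq' m) \<phi> x' = h x'" unfolding Hm_def using tx' by (rule limI)
  have hx: "0 < h x" and hx': "0 < h x'" using hpos x x' by auto
  have le1: "h x \<le> ?e * h x'"
    by (rule LIMSEQ_le[OF tx tendsto_mult_left[OF tx']]) (use ces[OF xS x'S ag(1)] in auto)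
  have le2: "h x' \<le> ?e * h x"
    by (rule LIMSEQ_le[OF tx' tendsto_mult_left[OF tx]]) (use ces[OF x'S xS ag(2)] in auto)
  have r1: "h x / h x' \<le> exp (C\<phi> / 2)" using le1 hx' e by (simp add: divide_le_eq)
  have "exp (- C\<phi> / 2) * h x' \<le> h x"
  proof -
    have "exp (- C\<phi> / 2) * h x' \<le> exp (- C\<phi> / 2) * (exp (C\<phi> / 2) * h x)"
      using le2 e by (intro mult_left_mono) auto
    also have "\<dots> = h x" by (simp add: exp_minus field_simps)
    finally show ?thesis .
  qed
  hence r2: "exp (- C\<phi> / 2) \<le> h x / h x'" using hx' by (simp add: le_divide_eq)
  show ?thesis using r1 r2 Hx Hx' by simp
qed

end
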